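(* On the first Heisenberg group $\mathbb H^1$, for every $k\in\mathbb N$ the polynomials $$P(z,t)=\big((1+k)t+ik|z|^2\big)z^k\qquad\text{and}\qquad \tilde P(z,t)=\big((1+k)t-ik|z|^2\big)\bar z^k$$ are strongly harmonic on $\mathbb H^1$ with respect to the balls of the gauge $\mathcal N(z,t)=(|z|^4+t^2)^{1/4}$; i.e. for every $p\in\mathbb H^1$ and $R>0$, $P(p)=\frac{1}{|B(p,R)|}\int_{B(p,R)}P(q)\,dq$, and likewise for $\tilde P$.
   Context: $\mathbb H^1=\mathbb C\times\mathbb R$ with coordinates $(z,t)$, $z=x+iy$, and group law $(z_1,t_1)(z_2,t_2)=(z_1+z_2,\,t_1+t_2+2\,\mathrm{Im}(z_1\bar z_2))$; $(z,t)^{-1}=(-z,-t)$. The measure $dq$ is Lebesgue measure on $\mathbb R^3$. Balls are $B(p,R)=\{q:\mathcal N(p^{-1}q)\le R\}$. The mean value property for complex-valued functions is understood componentwise (equivalently, for the complex integral). *)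

theory Defs
  imports "HOL-Analysis.Analysis"
begin

text \<open>Points of the first Heisenberg group H^1 = C x R, as the euclidean space
  complex \<times> real (Lebesgue measure on this type is Lebesgue measure on R^3).\<close>

definition heis_mult :: "complex \<times> real \<Rightarrow> complex \<times> real \<Rightarrow> complex \<times> real" where
  "heis_mult p q = (fst p + fst q, snd p + snd q + 2 * Im (fst p * cnj (fst q)))"

definition heis_inv :: "complex \<times> real \<Rightarrow> complex \<times> real" where
  "heis_inv p = (- fst p, - snd p)"

definition heis_gauge :: "complex \<times> real \<Rightarrow> real" where
  "heis_gauge p = ((cmod (fst p)) ^ 4 + (snd p)\<^sup>2) powr (1/4)"

definition heis_ball :: "complex \<times> real \<Rightarrow> real \<Rightarrow> (complex \<times> real) set" where
  "heis_ball p R = {q. heis_gauge (heis_mult (heis_inv p) q) \<le> R}"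

text \<open>Mean value property over gauge balls (complex-valued, HK integral = Lebesgue integral
  for integrable functions).\<close>
definition strongly_harmonic :: "(complex \<times> real \<Rightarrow> complex) \<Rightarrow> bool" where
  "strongly_harmonic f \<longleftrightarrow> (\<forall>p. \<forall>R>0.
      f integrable_on heis_ball p R \<and>
      f p = integral (heis_ball p R) f / complex_of_real (measure lebesgue (heis_ball p R)))"

definition heisP :: "nat \<Rightarrow> complex \<times> real \<Rightarrow> complex" where
  "heisP k q = (complex_of_real ((1 + real k) * snd q) + \<i> * complex_of_real (real k * (cmod (fst q))\<^sup>2))
               * (fst q) ^ k"

definition heisPt :: "nat \<Rightarrow> complex \<times> real \<Rightarrow> complex" where
  "heisPt k q = (complex_of_real ((1 + real k) * snd q) - \<i> * complex_of_real (real k * (cmod (fst q))\<^sup>2))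
               * (cnj (fst q)) ^ k"

end

theory Submission
  imports Defs
begin

lemma fiber_preserve:
  fixes \<phi> :: "'a::euclidean_space \<Rightarrow> 'b::euclidean_space \<Rightarrow> 'b"
  assumes meas: "(\<lambda>q. (fst q, \<phi> (fst q) (snd q))) \<in> borel \<rightarrow>\<^sub>M borel"
  and pres: "\<And>x. distr lborel borel (\<phi> x) = lborel"
  and measx: "\<And>x. \<phi> x \<in> borel \<rightarrow>\<^sub>M borel"
  shows "distr lborel borel (\<lambda>q. (fst q, \<phi> (fst q) (snd q))) = (lborel :: ('a\<times>'b) measure)"
proof -
  let ?T = "(\<lambda>q. (fst q, \<phi> (fst q) (snd q)))"
  have m2: "?T \<in> (lborel \<Otimes>\<^sub>M lborel) \<rightarrow>\<^sub>M (borel :: ('a\<times>'b) measure)"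
    using meas by (simp add: lborel_prod)
  have "distr (lborel \<Otimes>\<^sub>M lborel) borel ?T = (lborel \<Otimes>\<^sub>M lborel :: ('a\<times>'b) measure)"
  proof (rule measure_eqI)
    show "sets (distr (lborel \<Otimes>\<^sub>M lborel) borel ?T) = sets (lborel \<Otimes>\<^sub>M lborel :: ('a\<times>'b) measure)"
      by (simp add: lborel_prod borel_prod[symmetric])
  next
    fix A :: "('a\<times>'b) set" assume A: "A \<in> sets (distr (lborel \<Otimes>\<^sub>M lborel) borel ?T)"
    then have Ab: "A \<in> sets borel" by simp
    have A2: "A \<in> sets (lborel \<Otimes>\<^sub>M lborel)" using Ab by (metis lborel_prod sets_lborel)
    have pre: "?T -` A \<inter> space (lborel \<Otimes>\<^sub>M lborel) \<in> sets (lborel \<Otimes>\<^sub>M lborel)"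
      using m2 Ab by (meson measurable_sets)
    have "emeasure (distr (lborel \<Otimes>\<^sub>M lborel) borel ?T) A
        = emeasure (lborel \<Otimes>\<^sub>M lborel) (?T -` A \<inter> space (lborel \<Otimes>\<^sub>M lborel))"
      using m2 Ab by (simp add: emeasure_distr)
    also have "\<dots> = (\<integral>\<^sup>+x. emeasure lborel (Pair x -` (?T -` A \<inter> space (lborel \<Otimes>\<^sub>M lborel))) \<partial>lborel)"
      using pre by (rule lborel.emeasure_pair_measure_alt)
    also have "\<dots> = (\<integral>\<^sup>+x. emeasure lborel (Pair x -` A) \<partial>lborel)"
    proof (rule nn_integral_cong)
      fix x :: 'a
      have PA: "Pair x -` A \<in> sets borel"
        using A2 by (metis sets_Pair1 sets_lborel)
      have "Pair x -` (?T -` A \<inter> space (lborel \<Otimes>\<^sub>M lborel)) = \<phi> x -` (Pair x -` A) \<inter> space lborel"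
        by (auto simp: space_pair_measure)
      then have "emeasure lborel (Pair x -` (?T -` A \<inter> space (lborel \<Otimes>\<^sub>M lborel)))
            = emeasure (distr lborel borel (\<phi> x)) (Pair x -` A)"
        using PA measx by (simp add: emeasure_distr)
      also have "\<dots> = emeasure lborel (Pair x -` A)" by (simp add: pres)
      finally show "emeasure lborel (Pair x -` (?T -` A \<inter> space (lborel \<Otimes>\<^sub>M lborel))) = emeasure lborel (Pair x -` A)" .
    qed
    also have "\<dots> = emeasure (lborel \<Otimes>\<^sub>M lborel) A"
      using A2 by (rule lborel.emeasure_pair_measure_alt[symmetric])
    finally show "emeasure (distr (lborel \<Otimes>\<^sub>M lborel) borel ?T) A = emeasure (lborel \<Otimes>\<^sub>M lborel) A" .
  qed
  then show ?thesis by (simp add: lborel_prod)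
qed


definition lbp :: "('a::euclidean_space \<Rightarrow> 'a) \<Rightarrow> bool" where
  "lbp T \<longleftrightarrow> T \<in> borel_measurable borel \<and> distr lborel borel T = lborel"

lemma lbp_comp: "lbp f \<Longrightarrow> lbp g \<Longrightarrow> lbp (g \<circ> f)"
  unfolding lbp_def
proof (intro conjI)
  assume f: "f \<in> borel_measurable borel \<and> distr lborel borel f = lborel"
     and g: "g \<in> borel_measurable borel \<and> distr lborel borel g = lborel"
  show "g \<circ> f \<in> borel_measurable borel" using f g by (metis measurable_comp)
  have "distr lborel borel (g \<circ> f) = distr (distr lborel borel f) borel g"
    using f g by (subst distr_distr) auto
  then show "distr lborel borel (g \<circ> f) = lborel" using f g by simp
qed

lemma lbp_integral:
  fixes f :: "'a::euclidean_space \<Rightarrow> 'b::{banach, second_countable_topology}"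
  assumes "lbp T" "f \<in> borel_measurable borel"
  shows "integral\<^sup>L lborel (\<lambda>x. f (T x)) = integral\<^sup>L lborel f"
proof -
  have T: "T \<in> lborel \<rightarrow>\<^sub>M borel" using assms by (simp add: lbp_def)
  have "integral\<^sup>L (distr lborel borel T) f = integral\<^sup>L lborel (\<lambda>x. f (T x))"
    using T assms(2) by (rule integral_distr)
  then show ?thesis using assms by (simp add: lbp_def)
qed

lemma lbp_measure:
  assumes "lbp T" "A \<in> sets borel"
  shows "measure lborel (T -` A) = measure lborel A"
proof -
  have T: "T \<in> lborel \<rightarrow>\<^sub>M borel" using assms by (simp add: lbp_def)
  have "measure (distr lborel borel T) A = measure lborel (T -` A \<inter> space lborel)"
    using T assms(2) by (rule measure_distr)
  then show ?thesis using assms by (simp add: lbp_def)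
qed

lemma lbp_Phi: "distr (lborel :: (real \<times> real) measure) borel (\<lambda>q. Complex (fst q) (snd q)) = lborel"
proof (rule lborel_eqI[symmetric])
  fix l u :: complex
  assume le: "\<And>b. b \<in> Basis \<Longrightarrow> l \<bullet> b \<le> u \<bullet> b"
  have m: "(\<lambda>q. Complex (fst q) (snd q)) \<in> (lborel :: (real \<times> real) measure) \<rightarrow>\<^sub>M borel"
  proof -
    have "(\<lambda>q. Complex (fst q) (snd q)) \<in> (borel :: (real \<times> real) measure) \<rightarrow>\<^sub>M borel"
      unfolding Complex_eq by (intro borel_measurable_continuous_onI continuous_intros)
    then show ?thesis by simp
  qed
  have pre: "(\<lambda>q. Complex (fst q) (snd q)) -` box l u = box (Re l, Im l) (Re u, Im u)"
    by (auto simp: box_def Basis_complex_def Basis_prod_def inner_complex_def)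
  have "emeasure (distr lborel borel (\<lambda>q. Complex (fst q) (snd q))) (box l u) = emeasure lborel (box (Re l, Im l) (Re u, Im u))"
    using m by (simp add: emeasure_distr pre)
  also have "\<dots> = (\<Prod>b\<in>Basis. (u - l) \<bullet> b)"
    using le[of 1] le[of \<i>]
    by (simp add: emeasure_lborel_box_eq Basis_prod_def Basis_complex_def inner_complex_def box_eq_empty prod.union_disjoint ennreal_mult inner_prod_def mult.commute)
  finally show "emeasure (distr lborel borel (\<lambda>q. Complex (fst q) (snd q))) (box l u) = (\<Prod>b\<in>Basis. (u - l) \<bullet> b)" .
qed simp


lemma lbp_plus: "lbp (\<lambda>x::'a::euclidean_space. c + x)"
proof -
  have "(\<lambda>x::'a. c + x) \<in> borel_measurable borel"
    by (intro borel_measurable_continuous_onI continuous_intros)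
  moreover have "distr lborel borel (\<lambda>x::'a. c + x) = lborel"
    using lborel_distr_plus[of c] by simp
  ultimately show ?thesis by (simp add: lbp_def)
qed

lemma distr_plus': "distr lborel borel (\<lambda>y::'a::euclidean_space. y + c) = lborel"
proof -
  have "(\<lambda>y::'a. y + c) = (+) c" by (rule ext) (simp add: add.commute)
  then show ?thesis using lborel_distr_plus[of c] by simp
qed

lemma lbp_shear_snd:
  fixes g :: "'a::euclidean_space \<Rightarrow> 'b::euclidean_space"
  assumes "continuous_on UNIV g"
  shows "lbp (\<lambda>q::'a\<times>'b. (fst q, snd q + g (fst q)))"
proof -
  have m: "(\<lambda>q::'a\<times>'b. (fst q, snd q + g (fst q))) \<in> borel_measurable borel"
    by (intro borel_measurable_continuous_onI continuous_intros continuous_on_compose2[OF assms]) auto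
  have "distr lborel borel (\<lambda>q::'a\<times>'b. (fst q, (\<lambda>x y. y + g x) (fst q) (snd q))) = lborel"
    by (rule fiber_preserve) (use m in \<open>auto simp: distr_plus' intro!: borel_measurable_continuous_onI continuous_intros\<close>)
  with m show ?thesis by (simp add: lbp_def)
qed

lemma lbp_swap: "lbp (\<lambda>q::'a::euclidean_space\<times>'a. (snd q, fst q))"
proof -
  have m: "(\<lambda>q::'a\<times>'a. (snd q, fst q)) \<in> borel_measurable borel"
    by (intro borel_measurable_continuous_onI continuous_intros)
  have "(lborel \<Otimes>\<^sub>M lborel :: ('a\<times>'a) measure) = distr (lborel \<Otimes>\<^sub>M lborel) (lborel \<Otimes>\<^sub>M lborel) (\<lambda>(x, y). (y, x))"
    by (rule lborel_pair.distr_pair_swap)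
  also have "\<dots> = distr lborel borel (\<lambda>q::'a\<times>'a. (snd q, fst q))"
    proof (rule distr_cong)
    show "sets (lborel \<Otimes>\<^sub>M lborel :: ('a\<times>'a) measure) = sets borel" by (metis lborel_prod sets_lborel)
  qed (auto simp: lborel_prod)
  finally show ?thesis using m by (simp add: lbp_def lborel_prod)
qed

lemma lbp_shear_fst:
  "lbp (\<lambda>q::real\<times>real. (fst q + c * snd q, snd q))"
proof -
  have "lbp ((\<lambda>q::real\<times>real. (snd q, fst q)) \<circ> (\<lambda>q::real\<times>real. (fst q, snd q + c * fst q)) \<circ> (\<lambda>q::real\<times>real. (snd q, fst q)))"
    by (intro lbp_comp lbp_swap lbp_shear_snd continuous_intros)
  moreover have "((\<lambda>q::real\<times>real. (snd q, fst q)) \<circ> (\<lambda>q::real\<times>real. (fst q, snd q + c * fst q)) \<circ> (\<lambda>q::real\<times>real. (snd q, fst q)))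
     = (\<lambda>q::real\<times>real. (fst q + c * snd q, snd q))" by auto
  ultimately show ?thesis by simp
qed

lemma lbp_rot2:
  fixes a b :: real
  assumes "a^2 + b^2 = 1" "b \<noteq> 0"
  shows "lbp (\<lambda>q::real\<times>real. (a * fst q - b * snd q, b * fst q + a * snd q))"
proof -
  define \<tau> where "\<tau> = (1 - a) / b"
  have "lbp ((\<lambda>q::real\<times>real. (fst q + (-\<tau>) * snd q, snd q)) \<circ> (\<lambda>q::real\<times>real. (fst q, snd q + b * fst q)) \<circ> (\<lambda>q::real\<times>real. (fst q + (-\<tau>) * snd q, snd q)))"
    by (intro lbp_comp lbp_shear_fst lbp_shear_snd continuous_intros)
  moreover have "((\<lambda>q::real\<times>real. (fst q + (-\<tau>) * snd q, snd q)) \<circ> (\<lambda>q::real\<times>real. (fst q, snd q + b * fst q)) \<circ> (\<lambda>q::real\<times>real. (fst q + (-\<tau>) * snd q, snd q)))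
     = (\<lambda>q::real\<times>real. (a * fst q - b * snd q, b * fst q + a * snd q))"
  proof
    fix q :: "real \<times> real"
    have e1: "1 - \<tau> * b = a" using assms by (simp add: \<tau>_def)
    have e2: "\<tau> * (1 + a) = b"
    proof -
      have "\<tau> * (1 + a) = (1 - a^2) / b" by (simp add: \<tau>_def power2_eq_square algebra_simps)
      also have "\<dots> = b^2 / b" using assms(1) by (simp add: algebra_simps)
      also have "\<dots> = b" using assms(2) by (simp add: power2_eq_square)
      finally show ?thesis .
    qed
    obtain x y where q: "q = (x, y)" by (cases q)
    have c1: "x + - \<tau> * y + - \<tau> * (y + b * (x + - \<tau> * y)) = x * (1 - \<tau> * b) - y * (\<tau> * (1 + (1 - \<tau> * b)))"
      by (simp add: algebra_simps)
    have c2: "y + b * (x + - \<tau> * y) = b * x + (1 - \<tau> * b) * y"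
      by (simp add: algebra_simps)
    show "((\<lambda>q::real\<times>real. (fst q + (-\<tau>) * snd q, snd q)) \<circ> (\<lambda>q::real\<times>real. (fst q, snd q + b * fst q)) \<circ> (\<lambda>q::real\<times>real. (fst q + (-\<tau>) * snd q, snd q))) q
       = (a * fst q - b * snd q, b * fst q + a * snd q)"
      unfolding q using c1 c2 by (simp only: comp_def fst_conv snd_conv e1 e2 mult.commute)
  qed
  ultimately show ?thesis by simp
qed


lemma Phi_meas: "(\<lambda>q. Complex (fst q) (snd q)) \<in> (borel :: (real \<times> real) measure) \<rightarrow>\<^sub>M borel"
  unfolding Complex_eq by (intro borel_measurable_continuous_onI continuous_intros)

lemma lbp_cmult:
  assumes "cmod c = 1" "Im c \<noteq> 0"
  shows "lbp (\<lambda>z::complex. c * z)"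
proof -
  define \<Phi> where "\<Phi> = (\<lambda>q::real\<times>real. Complex (fst q) (snd q))"
  define R where "R = (\<lambda>q::real\<times>real. (Re c * fst q - Im c * snd q, Im c * fst q + Re c * snd q))"
  have "(Re c)^2 + (Im c)^2 = 1" using assms(1) cmod_power2[of c] by simp
  then have lR: "lbp R" unfolding R_def using assms(2) by (rule lbp_rot2)
  have mP: "\<Phi> \<in> borel \<rightarrow>\<^sub>M borel" unfolding \<Phi>_def by (rule Phi_meas)
  have mc: "(\<lambda>z::complex. c * z) \<in> borel \<rightarrow>\<^sub>M borel"
    by (intro borel_measurable_continuous_onI continuous_intros)
  have dP: "distr lborel borel \<Phi> = lborel" unfolding \<Phi>_def by (rule lbp_Phi)
  have comm: "(\<lambda>z::complex. c * z) \<circ> \<Phi> = \<Phi> \<circ> R"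
    by (auto simp: \<Phi>_def R_def complex_eq_iff)
  have "distr lborel borel (\<lambda>z::complex. c * z) = distr (distr lborel borel \<Phi>) borel (\<lambda>z::complex. c * z)"
    by (simp add: dP)
  also have "\<dots> = distr lborel borel ((\<lambda>z::complex. c * z) \<circ> \<Phi>)"
    using mP mc by (subst distr_distr) auto
  also have "\<dots> = distr lborel borel (\<Phi> \<circ> R)" by (simp add: comm)
  also have "\<dots> = distr (distr lborel borel R) borel \<Phi>"
    using mP lR by (subst distr_distr) (auto simp: lbp_def)
  also have "\<dots> = lborel" using lR dP by (simp add: lbp_def)
  finally show ?thesis using mc by (simp add: lbp_def)
qed

lemma lbp_fstmap:
  fixes \<rho> :: "'a::euclidean_space \<Rightarrow> 'a"
  assumes "lbp \<rho>"
  shows "lbp (\<lambda>q::'a\<times>'b::euclidean_space. (\<rho> (fst q), snd q))"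
proof -
  have [measurable]: "\<rho> \<in> borel_measurable borel" using assms by (simp add: lbp_def)
  have "(\<lambda>q::'a\<times>'b. (\<rho> (fst q), snd q)) \<in> (borel \<Otimes>\<^sub>M borel) \<rightarrow>\<^sub>M (borel \<Otimes>\<^sub>M borel)"
    by measurable
  then have m: "(\<lambda>q::'a\<times>'b. (\<rho> (fst q), snd q)) \<in> borel_measurable borel" by (simp add: borel_prod)
  have id: "distr lborel borel (\<lambda>x::'b. x) = lborel" by (rule distr_id2) simp
  have "distr lborel borel \<rho> \<Otimes>\<^sub>M distr lborel borel (\<lambda>x::'b. x) = distr (lborel \<Otimes>\<^sub>M lborel) (borel \<Otimes>\<^sub>M borel) (\<lambda>(x, y). (\<rho> x, y))"
    by (rule pair_measure_distr) (auto simp: id intro: lborel.sigma_finite_measure_axioms)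
  also have "\<dots> = distr lborel borel (\<lambda>q::'a\<times>'b. (\<rho> (fst q), snd q))"
  proof (rule distr_cong)
    show "sets (borel \<Otimes>\<^sub>M borel :: ('a\<times>'b) measure) = sets borel" by (metis borel_prod)
  qed (auto simp: lborel_prod)
  finally show ?thesis using m assms id by (simp add: lbp_def lborel_prod)
qed

lemma lbp_flip: "lbp (\<lambda>q::complex\<times>real. (fst q, - snd q))"
proof -
  have m: "(\<lambda>q::complex\<times>real. (fst q, - snd q)) \<in> borel_measurable borel"
    by (intro borel_measurable_continuous_onI continuous_intros)
  have "distr lborel borel (\<lambda>q::complex\<times>real. (fst q, (\<lambda>x y. - y) (fst q) (snd q))) = lborel"
    by (rule fiber_preserve) (use m in \<open>auto simp: lborel_distr_uminus intro!: borel_measurable_continuous_onI continuous_intros\<close>)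
  with m show ?thesis by (simp add: lbp_def)
qed

lemma lbp_heis: "lbp (heis_mult p)"
proof -
  have "lbp ((\<lambda>q. p + q) \<circ> (\<lambda>q::complex\<times>real. (fst q, snd q + 2 * Im (fst p * cnj (fst q)))))"
    by (intro lbp_comp lbp_plus lbp_shear_snd continuous_intros)
  moreover have "((\<lambda>q. p + q) \<circ> (\<lambda>q::complex\<times>real. (fst q, snd q + 2 * Im (fst p * cnj (fst q))))) = heis_mult p"
    by (auto simp: heis_mult_def fun_eq_iff prod_eq_iff)
  ultimately show ?thesis by simp
qed

lemma ofIm: "complex_of_real (Im x) = (x - cnj x) / (2 * \<i>)"
  by (simp add: complex_eq_iff)

lemma ofnorm2: "complex_of_real ((cmod x)\<^sup>2) = x * cnj x"
  by (rule complex_norm_square)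

lemma heisP_expand:
  "heisP k (heis_mult (w,s) (v, t)) = (of_real (1 + real k) * (of_real s + of_real t + 2 * ((w * cnj v - cnj w * v) / (2 * \<i>)))
         + \<i> * (of_real (real k) * ((w + v) * (cnj w + cnj v)))) * (w+v)^k"
  unfolding heisP_def heis_mult_def fst_conv snd_conv
  by (simp only: of_real_mult of_real_add ofIm ofnorm2 complex_cnj_mult complex_cnj_cnj complex_cnj_add of_real_numeral)

lemma pair_alg:
  fixes U w v cw cv :: complex and c s t kk :: real
  shows "(of_real c * (of_real s + of_real t + 2 * ((w * cv - cw * v) / (2 * \<i>)))
         + \<i> * (of_real kk * ((w + v) * (cw + cv)))) * U
       + (of_real c * (of_real s + of_real (-t) + 2 * ((w * cv - cw * v) / (2 * \<i>)))
         + \<i> * (of_real kk * ((w + v) * (cw + cv)))) * U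
     = 2 * ((of_real c * of_real s + \<i> * of_real kk * (w * cw + v * cv)) * U
            - \<i> * (of_real c - of_real kk) * w * cv * U + \<i> * (of_real c + of_real kk) * cw * v * U)"
  by (simp add: field_simps)

lemma pair_identity:
  fixes w v :: complex and s t :: real
  shows "heisP k (heis_mult (w,s) (v, t)) + heisP k (heis_mult (w,s) (v, -t))
     = 2 * ((of_real (1 + real k) * of_real s + \<i> * of_real (real k) * (w * cnj w + v * cnj v)) * (w + v)^k
            - \<i> * (of_real (1 + real k) - of_real (real k)) * w * cnj v * (w + v)^k
            + \<i> * (of_real (1 + real k) + of_real (real k)) * cnj w * v * (w + v)^k)"
  unfolding heisP_expand by (rule pair_alg)


definition zeta :: "nat \<Rightarrow> complex" where
  "zeta N = exp (2 * of_real pi * \<i> / of_nat N)"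

lemma zeta_pow: "zeta N ^ m = exp (2 * of_real pi * \<i> * of_nat m / of_nat N)"
proof -
  have "zeta N ^ m = exp (of_nat m * (2 * of_real pi * \<i> / of_nat N))"
    unfolding zeta_def by (rule exp_of_nat_mult[symmetric])
  then show ?thesis by (simp add: mult_ac)
qed

lemma zeta_pow_eq_1: "N \<ge> 1 \<Longrightarrow> zeta N ^ m = 1 \<longleftrightarrow> N dvd m"
  unfolding zeta_pow by (rule complex_root_unity_eq_1)

lemma zeta_N: "N \<ge> 1 \<Longrightarrow> zeta N ^ N = 1"
  by (simp add: zeta_pow_eq_1)

lemma norm_zeta: "cmod (zeta N) = 1"
proof -
  have "zeta N = exp (\<i> * complex_of_real (2 * pi / real N))"
    unfolding zeta_def by (simp add: field_simps)
  then show ?thesis by (simp only: norm_exp_i_times)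
qed

lemma cnj_zeta_pow: "N \<ge> 1 \<Longrightarrow> cnj (zeta N ^ l) = (zeta N ^ l) ^ (N - 1)"
proof -
  assume N: "N \<ge> 1"
  let ?e = "zeta N ^ l"
  have n: "cmod ?e = 1" by (simp add: norm_power norm_zeta)
  have a: "cnj ?e * ?e = 1"
    using complex_norm_square[of ?e] n by (simp add: mult.commute)
  have b: "?e * ?e ^ (N - 1) = 1"
  proof -
    have "?e * ?e ^ (N - 1) = ?e ^ N" using N by (simp add: power_eq_if[of ?e N])
    also have "\<dots> = (zeta N ^ N) ^ l" by (simp add: power_mult[symmetric] mult.commute)
    also have "\<dots> = 1" using N by (simp add: zeta_N)
    finally show ?thesis .
  qed
  have "cnj ?e = cnj ?e * (?e * ?e ^ (N - 1))" using b by simp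
  also have "\<dots> = (cnj ?e * ?e) * ?e ^ (N - 1)" by (simp add: mult.assoc)
  also have "\<dots> = ?e ^ (N - 1)" using a by simp
  finally show ?thesis .
qed

lemma cnj_zeta_mult: "cnj (zeta N ^ l) * zeta N ^ l = 1"
proof -
  have n: "cmod (zeta N ^ l) = 1" by (simp add: norm_power norm_zeta)
  show ?thesis using complex_norm_square[of "zeta N ^ l"] n by (simp add: mult.commute)
qed

lemma rou_sum:
  assumes "N \<ge> 1"
  shows "(\<Sum>l<N. (zeta N ^ m) ^ l) = (if N dvd m then of_nat N else 0)"
proof (cases "N dvd m")
  case True
  then have "zeta N ^ m = 1" using assms zeta_pow_eq_1 by blast
  then show ?thesis using True by simp
next
  case False
  then have ne: "zeta N ^ m \<noteq> 1" using assms zeta_pow_eq_1 by blast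
  have "(zeta N ^ m) ^ N = (zeta N ^ N) ^ m" by (simp add: power_mult[symmetric] mult.commute)
  also have "\<dots> = 1" using assms by (simp add: zeta_N)
  finally have "(zeta N ^ m) ^ N = 1" .
  then show ?thesis using False ne by (simp add: geometric_sum)
qed

lemma bin_sum:
  assumes "N \<ge> 1"
  shows "(\<Sum>l<N. (zeta N ^ l) ^ m * (w + zeta N ^ l * z) ^ k)
       = of_nat N * (\<Sum>j\<le>k. if N dvd (m + j) then of_nat (k choose j) * z ^ j * w ^ (k - j) else 0)"
proof -
  have step: "(zeta N ^ l) ^ m * (w + zeta N ^ l * z) ^ k
        = (\<Sum>j\<le>k. of_nat (k choose j) * z ^ j * w ^ (k - j) * (zeta N ^ (m + j)) ^ l)" for l
  proof -
    have "(w + zeta N ^ l * z) ^ k = (\<Sum>j\<le>k. of_nat (k choose j) * (zeta N ^ l * z) ^ j * w ^ (k - j))"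
      by (subst add.commute) (rule binomial_ring)
    then have "(zeta N ^ l) ^ m * (w + zeta N ^ l * z) ^ k
        = (\<Sum>j\<le>k. (zeta N ^ l) ^ m * (of_nat (k choose j) * (zeta N ^ l * z) ^ j * w ^ (k - j)))"
      by (simp add: sum_distrib_left)
    also have "\<dots> = (\<Sum>j\<le>k. of_nat (k choose j) * z ^ j * w ^ (k - j) * (zeta N ^ (m + j)) ^ l)"
    proof (rule sum.cong)
      fix j assume "j \<in> {..k}"
      have "(zeta N ^ l) ^ m * (zeta N ^ l * z) ^ j = z ^ j * (zeta N ^ (m + j)) ^ l"
        by (simp add: power_mult_distrib power_add power_mult[symmetric] mult.commute mult.left_commute)
      then show "(zeta N ^ l) ^ m * (of_nat (k choose j) * (zeta N ^ l * z) ^ j * w ^ (k - j))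
            = of_nat (k choose j) * z ^ j * w ^ (k - j) * (zeta N ^ (m + j)) ^ l"
        by (metis (no_types, lifting) mult.assoc mult.commute mult.left_commute)
    qed simp
    finally show ?thesis .
  qed
  have "(\<Sum>l<N. (zeta N ^ l) ^ m * (w + zeta N ^ l * z) ^ k)
      = (\<Sum>l<N. \<Sum>j\<le>k. of_nat (k choose j) * z ^ j * w ^ (k - j) * (zeta N ^ (m + j)) ^ l)"
    by (simp only: step)
  also have "\<dots> = (\<Sum>j\<le>k. \<Sum>l<N. of_nat (k choose j) * z ^ j * w ^ (k - j) * (zeta N ^ (m + j)) ^ l)"
    by (rule sum.swap)
  also have "\<dots> = (\<Sum>j\<le>k. of_nat (k choose j) * z ^ j * w ^ (k - j) * (\<Sum>l<N. (zeta N ^ (m + j)) ^ l))"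
    by (simp add: sum_distrib_left)
  also have "\<dots> = (\<Sum>j\<le>k. of_nat (k choose j) * z ^ j * w ^ (k - j) * (if N dvd (m + j) then of_nat N else 0))"
    using assms by (simp add: rou_sum)
  also have "\<dots> = of_nat N * (\<Sum>j\<le>k. if N dvd (m + j) then of_nat (k choose j) * z ^ j * w ^ (k - j) else 0)"
    by (simp add: sum_distrib_left mult.commute if_distrib cong: if_cong)
  finally show ?thesis .
qed


lemma dvd_small: "(N::nat) dvd x \<Longrightarrow> x < 2 * N \<Longrightarrow> x = 0 \<or> x = N"
proof -
  assume "N dvd x" "x < 2 * N"
  then obtain q where q: "x = N * q" by (auto elim!: dvdE)
  with \<open>x < 2 * N\<close> have "q < 2" by (cases "N = 0") auto
  then have "q = 0 \<or> q = 1" by auto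
  with q show ?thesis by auto
qed

lemma bs0:
  assumes "N = k + 3"
  shows "(\<Sum>l<N. (w + zeta N ^ l * z) ^ k) = of_nat N * w ^ k"
proof -
  have "(\<Sum>l<N. (w + zeta N ^ l * z) ^ k) = (\<Sum>l<N. (zeta N ^ l) ^ 0 * (w + zeta N ^ l * z) ^ k)" by simp
  also have "\<dots> = of_nat N * (\<Sum>j\<le>k. if N dvd (0 + j) then of_nat (k choose j) * z ^ j * w ^ (k - j) else 0)"
    using assms by (intro bin_sum) simp
  also have "(\<Sum>j\<le>k. if N dvd (0 + j) then of_nat (k choose j) * z ^ j * w ^ (k - j) else 0)
      = (\<Sum>j\<le>k. if j = 0 then of_nat (k choose j) * z ^ j * w ^ (k - j) else 0)"
  proof (rule sum.cong)
    fix j assume "j \<in> {..k}"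
    then have "N dvd (0 + j) \<longleftrightarrow> j = 0" using assms dvd_small[of N j] by auto
    then show "(if N dvd (0 + j) then of_nat (k choose j) * z ^ j * w ^ (k - j) else 0)
      = (if j = 0 then of_nat (k choose j) * z ^ j * w ^ (k - j) else (0::complex))" by simp
  qed simp
  also have "\<dots> = w ^ k" by (simp add: sum.delta)
  finally show ?thesis .
qed

lemma bs1:
  assumes "N = k + 3"
  shows "(\<Sum>l<N. zeta N ^ l * (w + zeta N ^ l * z) ^ k) = 0"
proof -
  have "(\<Sum>l<N. zeta N ^ l * (w + zeta N ^ l * z) ^ k) = (\<Sum>l<N. (zeta N ^ l) ^ 1 * (w + zeta N ^ l * z) ^ k)" by simp
  also have "\<dots> = of_nat N * (\<Sum>j\<le>k. if N dvd (1 + j) then of_nat (k choose j) * z ^ j * w ^ (k - j) else 0)"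
    using assms by (intro bin_sum) simp
  also have "(\<Sum>j\<le>k. if N dvd (1 + j) then of_nat (k choose j) * z ^ j * w ^ (k - j) else 0) = (\<Sum>j\<le>k. (0::complex))"
  proof (rule sum.cong)
    fix j assume "j \<in> {..k}"
    then have "\<not> N dvd (1 + j)" using assms dvd_small[of N "1 + j"] by auto
    then show "(if N dvd (1 + j) then of_nat (k choose j) * z ^ j * w ^ (k - j) else 0) = (0::complex)" by simp
  qed simp
  finally show ?thesis by simp
qed

lemma bsN:
  assumes "N = k + 3"
  shows "(\<Sum>l<N. (zeta N ^ l) ^ (N - 1) * (w + zeta N ^ l * z) ^ k) = of_nat N * (of_nat k * z * w ^ (k - 1))"
proof -
  have "(\<Sum>l<N. (zeta N ^ l) ^ (N - 1) * (w + zeta N ^ l * z) ^ k)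
       = of_nat N * (\<Sum>j\<le>k. if N dvd (N - 1 + j) then of_nat (k choose j) * z ^ j * w ^ (k - j) else 0)"
    using assms by (intro bin_sum) simp
  also have "(\<Sum>j\<le>k. if N dvd (N - 1 + j) then of_nat (k choose j) * z ^ j * w ^ (k - j) else 0)
      = (\<Sum>j\<le>k. if j = 1 then of_nat (k choose j) * z ^ j * w ^ (k - j) else 0)"
  proof (rule sum.cong)
    fix j assume "j \<in> {..k}"
    have e: "N - 1 + 1 = N" using assms by simp
    have "j = 1 \<Longrightarrow> N dvd (N - 1 + j)" using e by simp
    moreover have "N dvd (N - 1 + j) \<Longrightarrow> j = 1" using \<open>j \<in> {..k}\<close> assms dvd_small[of N "N - 1 + j"] by auto
    ultimately have "N dvd (N - 1 + j) \<longleftrightarrow> j = 1" by blast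
    then show "(if N dvd (N - 1 + j) then of_nat (k choose j) * z ^ j * w ^ (k - j) else 0)
      = (if j = 1 then of_nat (k choose j) * z ^ j * w ^ (k - j) else (0::complex))" by simp
  qed simp
  also have "\<dots> = of_nat k * z * w ^ (k - 1)"
    by (cases k) (simp_all add: sum.delta)
  finally show ?thesis .
qed

lemma point_sum:
  assumes N: "N = k + 3"
  shows "(\<Sum>l<N. heisP k (heis_mult (w,s) (zeta N ^ l * z, t)) + heisP k (heis_mult (w,s) (zeta N ^ l * z, -t)))
       = 2 * of_nat N * heisP k (w,s)"
proof -
  define c where "c = complex_of_real (1 + real k)"
  define kk where "kk = complex_of_real (real k)"
  define A where "A = c * of_real s + \<i> * kk * (w * cnj w + z * cnj z)"
  have N1: "N \<ge> 1" using N by simp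
  have each: "heisP k (heis_mult (w,s) (zeta N ^ l * z, t)) + heisP k (heis_mult (w,s) (zeta N ^ l * z, -t))
     = 2 * (A * (w + zeta N ^ l * z)^k
            - \<i> * (c - kk) * w * cnj z * ((zeta N ^ l) ^ (N - 1) * (w + zeta N ^ l * z)^k)
            + \<i> * (c + kk) * cnj w * z * (zeta N ^ l * (w + zeta N ^ l * z)^k))" for l
  proof -
    have vv: "zeta N ^ l * z * cnj (zeta N ^ l * z) = z * cnj z"
      using cnj_zeta_mult[of N l] by (simp add: mult_ac)
    show ?thesis
      unfolding pair_identity c_def[symmetric] kk_def[symmetric] vv A_def
      using cnj_zeta_pow[OF N1, of l] by (simp add: algebra_simps)
  qed
  have "(\<Sum>l<N. heisP k (heis_mult (w,s) (zeta N ^ l * z, t)) + heisP k (heis_mult (w,s) (zeta N ^ l * z, -t)))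
     = 2 * (A * (\<Sum>l<N. (w + zeta N ^ l * z)^k)
            - \<i> * (c - kk) * w * cnj z * (\<Sum>l<N. (zeta N ^ l) ^ (N - 1) * (w + zeta N ^ l * z)^k)
            + \<i> * (c + kk) * cnj w * z * (\<Sum>l<N. zeta N ^ l * (w + zeta N ^ l * z)^k))"
    unfolding each by (simp add: sum_distrib_left sum_subtractf sum.distrib)
  also have "\<dots> = 2 * (A * (of_nat N * w ^ k) - \<i> * (c - kk) * w * cnj z * (of_nat N * (of_nat k * z * w ^ (k - 1))))"
    by (simp only: bs0[OF N] bs1[OF N] bsN[OF N]) simp
  also have "\<dots> = 2 * of_nat N * heisP k (w,s)"
  proof -
    have ck: "c - kk = 1" by (simp add: c_def kk_def)
    have wk: "of_nat k * (w * w ^ (k - 1)) = of_nat k * w ^ k" by (cases k) simp_all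
    have hp: "heisP k (w,s) = (c * of_real s + \<i> * kk * (w * cnj w)) * w ^ k"
      unfolding heisP_def c_def kk_def by (simp add: ofnorm2[symmetric] of_real_mult)
    have e1: "\<i> * (c - kk) * w * cnj z * (of_nat N * (of_nat k * z * w ^ (k - 1)))
        = \<i> * (z * cnj z) * of_nat N * (of_nat k * (w * w ^ (k - 1)))"
      by (simp only: ck) (simp add: mult_ac)
    also have "\<dots> = \<i> * kk * (z * cnj z) * (of_nat N * w ^ k)"
      by (simp only: wk) (simp add: kk_def mult_ac)
    finally have e1: "\<i> * (c - kk) * w * cnj z * (of_nat N * (of_nat k * z * w ^ (k - 1)))
        = \<i> * kk * (z * cnj z) * (of_nat N * w ^ k)" .
    show ?thesis unfolding e1 hp A_def
      by (simp add: algebra_simps)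
  qed
  finally show ?thesis .
qed

definition B0 :: "real \<Rightarrow> (complex \<times> real) set" where
  "B0 R = {q. (cmod (fst q))^4 + (snd q)^2 \<le> R^4}"

lemma heis_inv_mult: "heis_mult (heis_inv p) (heis_mult p q) = q"
proof -
  have "Im (- fst p * cnj (fst p + fst q)) = - Im (fst p * cnj (fst q))"
    by (simp add: algebra_simps)
  then show ?thesis by (simp add: heis_mult_def heis_inv_def prod_eq_iff)
qed

lemma heis_mult_inv: "heis_mult p (heis_mult (heis_inv p) q) = q"
  by (simp add: heis_mult_def heis_inv_def prod_eq_iff algebra_simps)

lemma gauge_le_iff:
  assumes "R > 0"
  shows "heis_gauge q \<le> R \<longleftrightarrow> q \<in> B0 R"
proof -
  define a where "a = (cmod (fst q))^4 + (snd q)^2"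
  have a0: "a \<ge> 0" unfolding a_def by simp
  have g: "heis_gauge q = a powr (1/4)" unfolding heis_gauge_def a_def by simp
  have "a powr (1/4) \<le> R \<longleftrightarrow> a \<le> R^4"
  proof
    assume h: "a powr (1/4) \<le> R"
    have "a = (a powr (1/4)) ^ 4"
    proof (cases "a = 0")
      case False
      then have "a > 0" using a0 by simp
      have "(a powr (1/4)) ^ 4 = a powr (of_nat 4 * (1/4))" using False by (rule powr_power)
      also have "\<dots> = a" using False a0 by simp
      finally show ?thesis by simp
    qed simp
    also have "\<dots> \<le> R ^ 4" using h by (intro power_mono) simp_all
    finally show "a \<le> R^4" .
  next
    assume h: "a \<le> R^4"
    have "a powr (1/4) \<le> (R^4) powr (1/4)" using h a0 by (intro powr_mono2) simp_all
    also have "\<dots> = R"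
    proof -
      have "R^4 = R powr (real 4)" using assms by (rule powr_realpow[symmetric])
      then have "(R^4) powr (1/4) = R powr (real 4 * (1/4))" by (simp add: powr_powr)
      also have "\<dots> = R" using assms by simp
      finally show ?thesis .
    qed
    finally show "a powr (1/4) \<le> R" .
  qed
  then show ?thesis unfolding g B0_def a_def by simp
qed

lemma ball_eq: "R > 0 \<Longrightarrow> heis_ball p R = heis_mult (heis_inv p) -` B0 R"
  unfolding heis_ball_def by (auto simp: gauge_le_iff)

lemma B0_closed: "closed (B0 R)"
  unfolding B0_def by (intro closed_Collect_le continuous_intros)

lemma B0_bounded: "bounded (B0 R)"
proof -
  have "norm q \<le> \<bar>R\<bar> + R^2" if "q \<in> B0 R" for q
  proof -
    have h: "(cmod (fst q))^4 + (snd q)^2 \<le> R^4" using that by (simp add: B0_def)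
    have h1: "(cmod (fst q))^4 \<le> R^4" using h zero_le_power2[of "snd q"] by linarith
    have h0: "0 \<le> (cmod (fst q))^4" by simp
    have h2: "(snd q)^2 \<le> R^4" using h h0 by linarith
    have "\<bar>R\<bar>^4 = R^4" by simp
    then have "(cmod (fst q))^4 \<le> \<bar>R\<bar>^4" using h1 by simp
    then have z: "cmod (fst q) \<le> \<bar>R\<bar>" using power_mono_iff[of "cmod (fst q)" "\<bar>R\<bar>" 4] by simp
    have "(R^2)^2 = R^4" by (simp add: power_mult[symmetric])
    then have "(snd q)^2 \<le> (R^2)^2" using h2 by simp
    then have t: "\<bar>snd q\<bar> \<le> R^2" using power2_le_iff_abs_le[of "R^2" "snd q"] by simp
    have "norm q \<le> norm (fst q) + norm (snd q)" using norm_Pair_le[of "fst q" "snd q"] by simp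
    then show ?thesis using z t by simp
  qed
  then show ?thesis unfolding bounded_iff by blast
qed

lemma B0_compact: "compact (B0 R)"
  using B0_closed B0_bounded by (simp add: compact_eq_bounded_closed)

lemma B0_borel: "B0 R \<in> sets borel"
  using B0_closed by (rule borel_closed)

lemma B0_rot: "cmod c = 1 \<Longrightarrow> (c * z, t) \<in> B0 R \<longleftrightarrow> (z, t) \<in> B0 R"
  by (simp add: B0_def norm_mult)

lemma B0_flip: "(z, - t) \<in> B0 R \<longleftrightarrow> (z, t) \<in> B0 R"
  by (simp add: B0_def)

lemma B0_pos:
  assumes "R > 0"
  shows "measure lborel (B0 R) > 0"
proof -
  define r where "r = min (R/2) (R^2/2)"
  have r: "r > 0" using assms by (simp add: r_def)
  have sub: "ball 0 r \<subseteq> B0 R"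
  proof
    fix q :: "complex \<times> real" assume "q \<in> ball 0 r"
    then have nq: "norm q < r" by simp
    have nP: "norm q = sqrt ((cmod (fst q))^2 + (norm (snd q))^2)"
      using norm_Pair[of "fst q" "snd q"] by simp
    have "cmod (fst q) \<le> norm q" unfolding nP by (rule real_sqrt_sum_squares_ge1)
    then have nz: "cmod (fst q) < r" using nq by linarith
    have "norm (snd q) \<le> norm q" unfolding nP by (rule real_sqrt_sum_squares_ge2)
    then have nt: "\<bar>snd q\<bar> < r" using nq by simp
    have "(cmod (fst q))^4 \<le> (R/2)^4"
      using nz r by (intro power_mono) (auto simp: r_def)
    moreover have "(snd q)^2 \<le> (R^2/2)^2"
      using nt r by (simp add: power2_le_iff_abs_le r_def)
    ultimately have "(cmod (fst q))^4 + (snd q)^2 \<le> (R/2)^4 + (R^2/2)^2" by simp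
    also have "\<dots> \<le> R^4"
    proof -
      have a: "(R/2)^4 = R^4/16" by (simp add: power_divide)
      have b: "(R^2/2)^2 = R^4/4" by (simp add: power_divide power_mult[symmetric])
      have "0 \<le> R^4" by simp
      then show ?thesis unfolding a b by linarith
    qed
    finally show "q \<in> B0 R" by (simp add: B0_def)
  qed
  have "0 < measure lborel (ball (0::complex\<times>real) r)" using content_ball_pos[OF r] by simp
  also have "\<dots> \<le> measure lborel (B0 R)"
  proof (rule measure_mono_fmeasurable[OF sub])
    show "ball 0 r \<in> sets lborel" by simp
    show "B0 R \<in> fmeasurable lborel"
      using B0_borel emeasure_bounded_finite[OF B0_bounded] by (simp add: fmeasurable_def)
  qed
  finally show ?thesis .
qed

lemma lbp_integrable:
  fixes f :: "'a::euclidean_space \<Rightarrow> 'b::{banach, second_countable_topology}"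
  assumes "lbp T" "integrable lborel f"
  shows "integrable lborel (\<lambda>x. f (T x))"
proof -
  have T: "T \<in> lborel \<rightarrow>\<^sub>M borel" using assms by (simp add: lbp_def)
  have fm: "f \<in> borel_measurable borel" using borel_measurable_integrable[OF assms(2)] by simp
  have "integrable (distr lborel borel T) f" using assms by (simp add: lbp_def)
  then show ?thesis using integrable_distr_eq[OF T fm] by simp
qed

lemma lbp_id: "lbp (\<lambda>x::'a::euclidean_space. x)"
  unfolding lbp_def by (simp add: distr_id2)

lemma Im_zeta_ne: "N \<ge> 3 \<Longrightarrow> Im (zeta N) \<noteq> 0"
proof -
  assume N: "N \<ge> 3"
  have z: "zeta N = exp (\<i> * complex_of_real (2 * pi / real N))"
    unfolding zeta_def by (simp add: field_simps)
  have "Im (zeta N) = sin (2 * pi / real N)" unfolding z by (simp add: Im_exp)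
  moreover have "sin (2 * pi / real N) > 0"
  proof (rule sin_gt_zero)
    show "0 < 2 * pi / real N" using N by simp
    have "2 * pi / real N \<le> 2 * pi / 3" using N by (intro divide_left_mono) auto
    also have "\<dots> < pi" by simp
    finally show "2 * pi / real N < pi" .
  qed
  ultimately show ?thesis by simp
qed

lemma lbp_zeta_pow:
  assumes "N \<ge> 3"
  shows "lbp (\<lambda>z::complex. zeta N ^ l * z)"
proof (induction l)
  case 0
  then show ?case using lbp_id by simp
next
  case (Suc l)
  have "lbp ((\<lambda>z::complex. zeta N * z) \<circ> (\<lambda>z::complex. zeta N ^ l * z))"
    using Suc lbp_cmult[OF norm_zeta Im_zeta_ne[OF assms]] by (rule lbp_comp)
  moreover have "((\<lambda>z::complex. zeta N * z) \<circ> (\<lambda>z::complex. zeta N ^ l * z)) = (\<lambda>z. zeta N ^ Suc l * z)"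
    by (simp add: fun_eq_iff mult.assoc)
  ultimately show ?case by simp
qed

lemma contP: "continuous_on UNIV (\<lambda>q. heisP k (heis_mult p q))"
  unfolding heisP_def heis_mult_def by (intro continuous_intros)

lemma contP1: "continuous_on UNIV (heisP k)"
  unfolding heisP_def by (intro continuous_intros)

lemma F_zero:
  assumes R: "R > 0"
  shows "integral\<^sup>L lborel (\<lambda>q. indicator (B0 R) q *\<^sub>R (heisP k (heis_mult p q) - heisP k p)) = 0"
proof -
  define N where "N = k + 3"
  have N3: "N \<ge> 3" by (simp add: N_def)
  define F where "F = (\<lambda>q. indicator (B0 R) q *\<^sub>R (heisP k (heis_mult p q) - heisP k p))"
  have intF: "integrable lborel F"
    unfolding F_def
    by (intro borel_integrable_compact B0_compact continuous_intros continuous_on_subset[OF contP]) auto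
  have Fm: "F \<in> borel_measurable borel" using borel_measurable_integrable[OF intF] by simp
  define Rl where "Rl = (\<lambda>l (q::complex\<times>real). (zeta N ^ l * fst q, snd q))"
  define RFl where "RFl = (\<lambda>l (q::complex\<times>real). (zeta N ^ l * fst q, - snd q))"
  have lR: "lbp (Rl l)" for l
    unfolding Rl_def by (rule lbp_fstmap[OF lbp_zeta_pow[OF N3]])
  have lRF: "lbp (RFl l)" for l
  proof -
    have "lbp ((\<lambda>q::complex\<times>real. (fst q, - snd q)) \<circ> Rl l)" by (intro lbp_comp lR lbp_flip)
    moreover have "((\<lambda>q::complex\<times>real. (fst q, - snd q)) \<circ> Rl l) = RFl l"
      by (simp add: Rl_def RFl_def fun_eq_iff)
    ultimately show ?thesis by simp
  qed
  have i1: "integral\<^sup>L lborel (\<lambda>q. F (Rl l q)) = integral\<^sup>L lborel F" for l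
    using lR Fm by (rule lbp_integral)
  have i2: "integral\<^sup>L lborel (\<lambda>q. F (RFl l q)) = integral\<^sup>L lborel F" for l
    using lRF Fm by (rule lbp_integral)
  have int1: "integrable lborel (\<lambda>q. F (Rl l q))" for l using lR intF by (rule lbp_integrable)
  have int2: "integrable lborel (\<lambda>q. F (RFl l q))" for l using lRF intF by (rule lbp_integrable)
  have pt: "(\<Sum>l<N. F (Rl l q) + F (RFl l q)) = 0" for q
  proof -
    obtain w s where p: "p = (w, s)" by (cases p)
    obtain z t where q: "q = (z, t)" by (cases q)
    have nz: "cmod (zeta N ^ l) = 1" for l by (simp add: norm_power norm_zeta)
    have e1: "F (Rl l q) = indicator (B0 R) q *\<^sub>R (heisP k (heis_mult (w,s) (zeta N ^ l * z, t)) - heisP k (w,s))" for l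
      unfolding F_def Rl_def q p by (simp add: indicator_def B0_rot[OF nz])
    have e2: "F (RFl l q) = indicator (B0 R) q *\<^sub>R (heisP k (heis_mult (w,s) (zeta N ^ l * z, -t)) - heisP k (w,s))" for l
      unfolding F_def RFl_def q p by (simp add: indicator_def B0_rot[OF nz] B0_flip)
    have "(\<Sum>l<N. F (Rl l q) + F (RFl l q))
       = indicator (B0 R) q *\<^sub>R ((\<Sum>l<N. heisP k (heis_mult (w,s) (zeta N ^ l * z, t)) + heisP k (heis_mult (w,s) (zeta N ^ l * z, -t)))
             - of_nat N * (2 * heisP k (w,s)))"
      unfolding e1 e2 by (simp add: scaleR_right_diff_distrib scaleR_sum_right sum.distrib sum_subtractf algebra_simps)
    also have "\<dots> = 0" unfolding point_sum[OF N_def] by simp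
    finally show ?thesis .
  qed
  have "0 = integral\<^sup>L lborel (\<lambda>q. \<Sum>l<N. F (Rl l q) + F (RFl l q))" by (simp add: pt)
  also have "\<dots> = (\<Sum>l<N. integral\<^sup>L lborel (\<lambda>q. F (Rl l q) + F (RFl l q)))"
    by (rule Bochner_Integration.integral_sum[where f = "\<lambda>l q. F (Rl l q) + F (RFl l q)"]) (use int1 int2 in auto)
  also have "\<dots> = (\<Sum>l<N. 2 * integral\<^sup>L lborel F)"
    by (rule sum.cong) (simp_all add: Bochner_Integration.integral_add[OF int1 int2] i1 i2)
  also have "\<dots> = of_nat N * (2 * integral\<^sup>L lborel F)" by simp
  finally have "of_nat N * (2 * integral\<^sup>L lborel F) = 0" by simp
  then show ?thesis using N3 by (simp add: F_def)
qed

lemma main_P: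
  assumes R: "R > 0"
  shows "heisP k integrable_on heis_ball p R \<and>
         heisP k p = integral (heis_ball p R) (heisP k) / complex_of_real (measure lebesgue (heis_ball p R))"
proof -
  define Bp where "Bp = heis_ball p R"
  have Bp_eq: "Bp = heis_mult (heis_inv p) -` B0 R" unfolding Bp_def using R by (rule ball_eq)
  have mi: "heis_mult (heis_inv p) \<in> borel_measurable borel" using lbp_heis[of "heis_inv p"] by (simp add: lbp_def)
  have Bp_borel: "Bp \<in> sets borel"
    using measurable_sets[OF mi B0_borel] unfolding Bp_eq by simp
  define H where "H = (\<lambda>q. indicator (B0 R) q *\<^sub>R heisP k (heis_mult p q))"
  have intH: "integrable lborel H"
    unfolding H_def
    by (intro borel_integrable_compact B0_compact continuous_on_subset[OF contP]) auto
  define G where "G = (\<lambda>x. indicator Bp x *\<^sub>R heisP k x)"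
  have G_eq: "G x = H (heis_mult (heis_inv p) x)" for x
    unfolding G_def H_def Bp_eq heis_mult_inv by (simp add: indicator_def)
  have intG: "integrable lborel G"
    unfolding G_eq using lbp_heis intH by (rule lbp_integrable)
  have Gm: "G \<in> borel_measurable borel" using borel_measurable_integrable[OF intG] by simp
  have "integral\<^sup>L lborel (\<lambda>q. G (heis_mult p q)) = integral\<^sup>L lborel G"
    using lbp_heis Gm by (rule lbp_integral)
  moreover have "(\<lambda>q. G (heis_mult p q)) = H" by (simp add: fun_eq_iff G_eq heis_inv_mult)
  ultimately have IG: "integral\<^sup>L lborel G = integral\<^sup>L lborel H" by simp
  have B0fin: "emeasure lborel (B0 R) < \<infinity>" by (rule emeasure_bounded_finite[OF B0_bounded])
  have B0s: "B0 R \<in> sets lborel" using B0_borel by simp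
  have intC: "integrable lborel (\<lambda>q. indicator (B0 R) q *\<^sub>R heisP k p)"
    using B0s B0fin by (rule integrable_indicator)
  have intF: "integrable lborel (\<lambda>q. indicator (B0 R) q *\<^sub>R (heisP k (heis_mult p q) - heisP k p))"
    by (intro borel_integrable_compact B0_compact continuous_intros continuous_on_subset[OF contP]) auto
  have Hsplit: "H = (\<lambda>q. indicator (B0 R) q *\<^sub>R (heisP k (heis_mult p q) - heisP k p) + indicator (B0 R) q *\<^sub>R heisP k p)"
    by (simp add: H_def fun_eq_iff scaleR_diff_right)
  have IH: "integral\<^sup>L lborel H = measure lborel (B0 R) *\<^sub>R heisP k p"
    unfolding Hsplit Bochner_Integration.integral_add[OF intF intC] F_zero[OF R]
    using B0s B0fin by (simp add: Bochner_Integration.integral_scaleR_left integral_indicator)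
  have meq: "measure lborel Bp = measure lborel (B0 R)"
  proof -
    have "heis_mult p -` Bp = B0 R" unfolding Bp_eq vimage_def by (simp add: heis_inv_mult)
    then show ?thesis using lbp_measure[OF lbp_heis[of p] Bp_borel] by simp
  qed
  have mleb: "measure lebesgue Bp = measure lborel Bp"
    using Bp_borel by (simp add: measure_completion)
  have si: "set_integrable lborel Bp (heisP k)" using intG by (simp add: set_integrable_def G_def)
  note hk = set_borel_integral_eq_integral[OF si]
  have Ival: "integral Bp (heisP k) = measure lborel (B0 R) *\<^sub>R heisP k p"
    using hk(2) IG IH by (simp add: set_lebesgue_integral_def G_def)
  have pos: "measure lborel (B0 R) > 0" using B0_pos[OF R] .
  have "heisP k p = integral Bp (heisP k) / complex_of_real (measure lebesgue Bp)"
    unfolding Ival mleb meq using pos by (simp add: scaleR_conv_of_real)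
  then show ?thesis using hk(1) unfolding Bp_def by simp
qed

lemma heisPt_cnj: "heisPt k = (\<lambda>q. cnj (heisP k q))"
  by (simp add: fun_eq_iff heisPt_def heisP_def)

theorem mainTheorem5:
  fixes k :: nat
  shows "strongly_harmonic (heisP k) \<and> strongly_harmonic (heisPt k)"
proof
  show "strongly_harmonic (heisP k)"
    unfolding strongly_harmonic_def using main_P by blast
  show "strongly_harmonic (heisPt k)"
    unfolding strongly_harmonic_def heisPt_cnj
  proof (intro allI impI conjI)
    fix p :: "complex \<times> real" and R :: real assume R: "R > 0"
    note m = main_P[OF R, of k p]
    show "(\<lambda>q. cnj (heisP k q)) integrable_on heis_ball p R"
      using m integrable_on_cnj_iff by blast
    have "cnj (heisP k p) = cnj (integral (heis_ball p R) (heisP k)) / complex_of_real (measure lebesgue (heis_ball p R))"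
      using m by simp
    then show "cnj (heisP k p) = integral (heis_ball p R) (\<lambda>q. cnj (heisP k q)) / complex_of_real (measure lebesgue (heis_ball p R))"
      by (simp add: integral_cnj)
  qed
qed

end
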